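(* Let $n\ge1$, $I=\{1,\dots,n\}$, and let $x,\sigma_1,\dots,\sigma_n,\tau_1,\dots,\tau_n$ be independent indeterminates; write $\sigma=(\sigma_i)_{i\in I}$, $\tau=(\tau_i)_{i\in I}$. For $j\in I$ let $\beta_j(\sigma,\tau)$ be the multiset $\{\sigma_i-\sigma_j: i\in I\}\cup\{\tau_i+\sigma_j: i\in I\}$, let $\phi_j(x;\sigma,\tau)=\phi(x;\beta_j(\sigma,\tau))$, and $\Phi(x;\sigma,\tau)=\sum_{j\in I}\phi_j(x;\sigma,\tau)$. Then $\Phi(x;\sigma,\tau)=\Phi(x;\tau,\sigma)$, where $\Phi(x;\tau,\sigma)$ is obtained by interchanging the roles of $\sigma$ and $\tau$.
   Context: For a multiset $\beta$, $\phi(x;\beta)=\prod_{b\in\beta,\,b\neq0}\frac{b-x}{b}$ (product with multiplicity over the nonzero elements; here this omits exactly the elements $\sigma_j-\sigma_j=0$). *)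

theory Defs
  imports Main "HOL-Library.Multiset"
begin

definition phi :: "'a::field \<Rightarrow> 'a multiset \<Rightarrow> 'a" where
  "phi x \<beta> = prod_mset (image_mset (\<lambda>b. (b - x) / b) (filter_mset (\<lambda>b. b \<noteq> 0) \<beta>))"

definition beta :: "nat \<Rightarrow> (nat \<Rightarrow> 'a::field) \<Rightarrow> (nat \<Rightarrow> 'a) \<Rightarrow> nat \<Rightarrow> 'a multiset" where
  "beta n \<sigma> \<tau> j = image_mset (\<lambda>i. \<sigma> i - \<sigma> j) (mset_set {1..n})
                 + image_mset (\<lambda>i. \<tau> i + \<sigma> j) (mset_set {1..n})"

definition Phi :: "nat \<Rightarrow> 'a::field \<Rightarrow> (nat \<Rightarrow> 'a) \<Rightarrow> (nat \<Rightarrow> 'a) \<Rightarrow> 'a" where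
  "Phi n x \<sigma> \<tau> = (\<Sum>j\<in>{1..n}. phi x (beta n \<sigma> \<tau> j))"

end

theory Submission
  imports Defs "HOL-Computational_Algebra.Polynomial"
begin

lemma prod_lin:
  fixes e :: "'b \<Rightarrow> 'a::comm_ring_1"
  assumes "finite A"
  shows "degree (\<Prod>b\<in>A. [:e b, 1:]) = card A \<and> coeff (\<Prod>b\<in>A. [:e b, 1:]) (card A) = 1
     \<and> (A \<noteq> {} \<longrightarrow> coeff (\<Prod>b\<in>A. [:e b, 1:]) (card A - 1) = sum e A)"
  using assms
proof (induction A rule: finite_induct)
  case empty
  then show ?case by simp
next
  case (insert x A)
  define Q where "Q = (\<Prod>b\<in>A. [:e b, 1:])"
  have Q': "(\<Prod>b\<in>insert x A. [:e b, 1:]) = smult (e x) Q + pCons 0 Q"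
    using insert by (simp add: Q_def mult_pCons_left)
  have dQ: "degree Q = card A" and cQ: "coeff Q (card A) = 1" using insert by (auto simp: Q_def)
  have "coeff Q (Suc (card A)) = 0" using dQ by (simp add: coeff_eq_0)
  moreover have "degree (smult (e x) Q + pCons 0 Q) \<le> Suc (card A)"
    by (rule degree_le) (auto simp: coeff_eq_0 dQ coeff_pCons split: nat.splits)
  moreover have "coeff (smult (e x) Q + pCons 0 Q) (Suc (card A)) = 1"
    using cQ \<open>coeff Q (Suc (card A)) = 0\<close> by simp
  moreover have "coeff (smult (e x) Q + pCons 0 Q) (card A) = e x + sum e A"
  proof (cases "A = {}")
    case True then show ?thesis using cQ by (simp add: Q_def)
  next
    case False
    then have "card A > 0" using insert by auto
    then obtain m where m: "card A = Suc m" using gr0_implies_Suc by blast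
    have "coeff Q m = sum e A" using insert False m by (simp add: Q_def)
    then show ?thesis using cQ m by simp
  qed
  ultimately show ?case using insert Q'
    by (auto intro!: antisym le_degree simp: sum.insert)
qed

lemma lagr:
  fixes P :: "'a::field poly"
  assumes fin: "finite A" and deg: "degree P < card A"
  shows "(\<Sum>a\<in>A. poly P a / (\<Prod>b\<in>A-{a}. (a - b))) = coeff P (card A - 1)"
proof -
  define w where "w a = (\<Prod>b\<in>A-{a}. (a - b))" for a
  define L where "L = (\<Sum>a\<in>A. smult (poly P a / w a) (\<Prod>b\<in>A-{a}. [:- b, 1:]))"
  have Ane: "A \<noteq> {}" using deg by auto
  have w0: "w a \<noteq> 0" if "a \<in> A" for a using fin by (auto simp: w_def)
  have polyprod: "poly (\<Prod>b\<in>B. [:- b, 1:]) y = (\<Prod>b\<in>B. y - b)" for B and y :: 'a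
    by (simp add: poly_prod)
  have evalL: "poly L a0 = poly P a0" if a0: "a0 \<in> A" for a0
  proof -
    have "poly L a0 = (\<Sum>a\<in>A. poly P a / w a * (\<Prod>b\<in>A-{a}. a0 - b))"
      by (simp add: L_def poly_sum polyprod)
    also have "\<dots> = poly P a0 / w a0 * (\<Prod>b\<in>A-{a0}. a0 - b)"
    proof (rule sum.remove[OF fin a0, THEN trans])
      have "(\<Prod>b\<in>A-{a}. a0 - b) = 0" if "a \<in> A - {a0}" for a
        using that a0 fin by (intro prod_zero) auto
      then show "poly P a0 / w a0 * (\<Prod>b\<in>A-{a0}. a0 - b) +
          (\<Sum>a\<in>A - {a0}. poly P a / w a * (\<Prod>b\<in>A-{a}. a0 - b)) =
          poly P a0 / w a0 * (\<Prod>b\<in>A-{a0}. a0 - b)" by simp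
    qed
    also have "\<dots> = poly P a0" using w0[OF a0] by (simp add: w_def)
    finally show ?thesis .
  qed
  have dprod: "degree (\<Prod>b\<in>A-{a}. [:- b, 1:]) = card A - 1" and
       cprod: "coeff (\<Prod>b\<in>A-{a}. [:- b, 1:]) (card A - 1) = 1" if "a \<in> A" for a
    using prod_lin[of "A-{a}" "\<lambda>b. - b"] fin that by auto
  have "degree L \<le> card A - 1"
    unfolding L_def
    by (rule degree_sum_le) (use fin in \<open>auto intro: order.trans[OF degree_smult_le] simp: dprod\<close>)
  then have "degree L < card A" using Ane fin card_gt_0_iff[of A] by linarith
  then have "L = P" using evalL deg by (intro poly_eqI_degree[of A]) auto
  then have "coeff P (card A - 1) = coeff L (card A - 1)" by simp
  also have "\<dots> = (\<Sum>a\<in>A. poly P a / w a)"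
    by (simp add: L_def coeff_sum) (rule sum.cong, use cprod in simp_all)
  finally show ?thesis by (simp add: w_def)
qed

lemma key:
  fixes c :: "'a::field \<Rightarrow> 'a"
  assumes fin: "finite A"
  shows "(\<Sum>a\<in>A. c a * (\<Prod>b\<in>A-{a}. (a - b + c b) / (a - b))) = sum c A"
proof (cases "A = {}")
  case True then show ?thesis by simp
next
  case Ane: False
  define N where "N = (\<Prod>b\<in>A. [:c b - b, 1:])"
  define D where "D = (\<Prod>b\<in>A. [:- b, 1:])"
  define P where "P = N - D"
  have N: "degree N = card A" "coeff N (card A) = 1" "coeff N (card A - 1) = (\<Sum>b\<in>A. c b - b)"
    using prod_lin[OF fin, of "\<lambda>b. c b - b"] Ane by (auto simp: N_def)
  have D: "degree D = card A" "coeff D (card A) = 1" "coeff D (card A - 1) = (\<Sum>b\<in>A. - b)"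
    using prod_lin[OF fin, of "\<lambda>b. - b"] Ane by (auto simp: D_def)
  have cpos: "card A > 0" using fin Ane by (simp add: card_gt_0_iff)
  have "degree P \<le> card A - 1"
  proof (rule degree_le, intro allI impI)
    fix i assume "card A - 1 < i"
    then have "i = card A \<or> i > card A" using cpos by linarith
    then show "coeff P i = 0"
      using N D by (auto simp: P_def coeff_eq_0)
  qed
  then have degP: "degree P < card A" using cpos by linarith
  have cP: "coeff P (card A - 1) = sum c A"
    using N D by (simp add: P_def sum_subtractf sum_negf)
  have tm: "poly P a / (\<Prod>b\<in>A-{a}. (a - b)) = c a * (\<Prod>b\<in>A-{a}. (a - b + c b) / (a - b))"
    if a: "a \<in> A" for a
  proof -
    have "poly N a = (\<Prod>b\<in>A. a - b + c b)"
      by (simp add: N_def poly_prod) (rule prod.cong, auto simp: algebra_simps)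
    also have "\<dots> = c a * (\<Prod>b\<in>A-{a}. a - b + c b)"
      using prod.remove[OF fin a, of "\<lambda>b. a - b + c b"] by simp
    finally have pN: "poly N a = c a * (\<Prod>b\<in>A-{a}. a - b + c b)" .
    have "poly D a = 0" using fin a by (simp add: D_def poly_prod)
    then have "poly P a = c a * (\<Prod>b\<in>A-{a}. a - b + c b)" by (simp add: P_def pN)
    then show ?thesis by (simp add: prod_dividef)
  qed
  have "(\<Sum>a\<in>A. c a * (\<Prod>b\<in>A-{a}. (a - b + c b) / (a - b)))
      = (\<Sum>a\<in>A. poly P a / (\<Prod>b\<in>A-{a}. (a - b)))"
    by (rule sum.cong) (simp_all add: tm)
  also have "\<dots> = sum c A" using lagr[OF fin degP] cP by simp
  finally show ?thesis .
qed

lemma phi_beta: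
  fixes u v :: "nat \<Rightarrow> 'a::field"
  assumes inj: "inj_on u {1..n}" and j: "j \<in> {1..n}" and nz: "\<forall>i\<in>{1..n}. v i + u j \<noteq> 0"
  shows "phi x (beta n u v j) = (\<Prod>i\<in>{1..n}-{j}. (u i - u j - x) / (u i - u j))
          * (\<Prod>i\<in>{1..n}. (v i + u j - x) / (v i + u j))"
proof -
  have s1: "{i\<in>{1..n}. u i - u j \<noteq> 0} = {1..n} - {j}"
    using inj j unfolding inj_on_def by fastforce
  have s2: "{i\<in>{1..n}. v i + u j \<noteq> 0} = {1..n}" using nz by blast
  have f: "filter_mset (\<lambda>b. b \<noteq> 0) (beta n u v j) = image_mset (\<lambda>i. u i - u j) (mset_set ({1..n}-{j}))
     + image_mset (\<lambda>i. v i + u j) (mset_set {1..n})"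
    by (simp only: beta_def filter_union_mset filter_mset_image_mset filter_mset_mset_set[OF finite_atLeastAtMost] s1 s2)
  show ?thesis
    unfolding phi_def f
    by (simp add: multiset.map_comp o_def prod_unfold_prod_mset)
qed

lemma phi0: "phi (0::'a::field) \<beta> = 1"
proof -
  have "image_mset (\<lambda>b. (b - 0) / b) (filter_mset (\<lambda>b. b \<noteq> (0::'a)) \<beta>)
        = image_mset (\<lambda>_. 1) (filter_mset (\<lambda>b. b \<noteq> 0) \<beta>)"
    by (rule image_mset_cong) simp
  then show ?thesis unfolding phi_def by simp
qed



theorem lemma4p3:
  fixes n :: nat and x :: "'a::field_char_0" and \<sigma> \<tau> :: "nat \<Rightarrow> 'a"
  assumes "n \<ge> 1"
    and "inj_on \<sigma> {1..n}"
    and "inj_on \<tau> {1..n}"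
    and "\<forall>i\<in>{1..n}. \<forall>j\<in>{1..n}. \<tau> i + \<sigma> j \<noteq> 0"
  shows "Phi n x \<sigma> \<tau> = Phi n x \<tau> \<sigma>"
proof (cases "x = 0")
  case True
  then show ?thesis by (simp add: Phi_def phi0)
next
  case xnz: False
  define I where "I = {1..n}"
  have injs: "inj_on \<sigma> I" and injt: "inj_on \<tau> I" using assms by (auto simp: I_def)
  have nz: "\<tau> i + \<sigma> j \<noteq> 0" if "i \<in> I" "j \<in> I" for i j using assms that by (auto simp: I_def)
  have injmt: "inj_on (\<lambda>i. - \<tau> i) I" using injt by (auto simp: inj_on_def)
  define S where "S = \<sigma> ` I"
  define T where "T = (\<lambda>i. - \<tau> i) ` I"
  define A where "A = S \<union> T"
  define c where "c a = (if a \<in> S then x else - x)" for a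
  have finI: "finite I" by (simp add: I_def)
  have disj: "S \<inter> T = {}"
  proof -
    have "\<sigma> j \<noteq> - \<tau> i" if "i \<in> I" "j \<in> I" for i j
      using nz[OF that] by (auto simp: add_eq_0_iff2 add.commute)
    then show ?thesis by (auto simp: S_def T_def)
  qed
  have finS: "finite S" "finite T" "finite A" using finI by (auto simp: S_def T_def A_def)
  define F where "F a = c a * (\<Prod>b\<in>A-{a}. (a - b + c b) / (a - b))" for a
  have "sum F A = sum c A" unfolding F_def by (rule key[OF finS(3)])
  also have "sum c A = sum c S + sum c T" unfolding A_def by (rule sum.union_disjoint; use finS disj in simp)
  also have "\<dots> = 0"
  proof -
    have "sum c S = of_nat (card S) * x" by (simp add: c_def)
    moreover have "sum c T = sum (\<lambda>_. - x) T" using disj by (intro sum.cong) (auto simp: c_def)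
    then have "sum c T = of_nat (card T) * (- x)" by simp
    moreover have "card S = card T" using injs injmt by (simp add: S_def T_def card_image)
    ultimately show ?thesis by simp
  qed
  finally have F0: "sum F A = 0" .
  have Fs: "F (\<sigma> j) = x * phi x (beta n \<sigma> \<tau> j)" if j: "j \<in> I" for j
  proof -
    have cs: "c (\<sigma> j) = x" using j by (simp add: c_def S_def)
    have Ad: "A - {\<sigma> j} = \<sigma> ` (I - {j}) \<union> T"
      using disj j injs by (auto simp: A_def S_def inj_on_def)
    have p1: "(\<Prod>b\<in>\<sigma> ` (I - {j}). (\<sigma> j - b + c b) / (\<sigma> j - b))
        = (\<Prod>i\<in>I-{j}. (\<sigma> i - \<sigma> j - x) / (\<sigma> i - \<sigma> j))"
    proof -
      have ij: "inj_on \<sigma> (I - {j})" using injs by (rule inj_on_subset) auto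
      have "(\<Prod>b\<in>\<sigma> ` (I - {j}). (\<sigma> j - b + c b) / (\<sigma> j - b))
          = (\<Prod>i\<in>I-{j}. (\<sigma> j - \<sigma> i + c (\<sigma> i)) / (\<sigma> j - \<sigma> i))"
        by (rule prod.reindex[OF ij, unfolded o_def])
      also have "\<dots> = (\<Prod>i\<in>I-{j}. (\<sigma> i - \<sigma> j - x) / (\<sigma> i - \<sigma> j))"
      proof (rule prod.cong[OF refl])
        fix i assume "i \<in> I - {j}"
        then have "c (\<sigma> i) = x" by (simp add: c_def S_def)
        then show "(\<sigma> j - \<sigma> i + c (\<sigma> i)) / (\<sigma> j - \<sigma> i) = (\<sigma> i - \<sigma> j - x) / (\<sigma> i - \<sigma> j)"
        proof -
          have e1: "\<sigma> i - \<sigma> j - x = - (\<sigma> j - \<sigma> i + x)" by (simp add: algebra_simps)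
          have e2: "\<sigma> i - \<sigma> j = - (\<sigma> j - \<sigma> i)" by (simp add: algebra_simps)
          have "(\<sigma> i - \<sigma> j - x) / (\<sigma> i - \<sigma> j) = (- (\<sigma> j - \<sigma> i + x)) / (- (\<sigma> j - \<sigma> i))"
            by (subst e1, subst e2, rule refl)
          then show ?thesis using \<open>c (\<sigma> i) = x\<close> by (simp only: minus_divide_divide)
        qed
      qed
      finally show ?thesis .
    qed
    have p2: "(\<Prod>b\<in>T. (\<sigma> j - b + c b) / (\<sigma> j - b))
        = (\<Prod>i\<in>I. (\<tau> i + \<sigma> j - x) / (\<tau> i + \<sigma> j))"
    proof -
      have "(\<Prod>b\<in>T. (\<sigma> j - b + c b) / (\<sigma> j - b))
          = (\<Prod>i\<in>I. (\<sigma> j - - \<tau> i + c (- \<tau> i)) / (\<sigma> j - - \<tau> i))"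
        unfolding T_def by (rule prod.reindex[OF injmt, unfolded o_def])
      also have "\<dots> = (\<Prod>i\<in>I. (\<tau> i + \<sigma> j - x) / (\<tau> i + \<sigma> j))"
      proof (rule prod.cong[OF refl])
        fix i assume i: "i \<in> I"
        then have "- \<tau> i \<in> T" by (simp add: T_def)
        then have "c (- \<tau> i) = - x" using disj by (auto simp: c_def)
        then show "(\<sigma> j - - \<tau> i + c (- \<tau> i)) / (\<sigma> j - - \<tau> i) = (\<tau> i + \<sigma> j - x) / (\<tau> i + \<sigma> j)"
          by (simp add: algebra_simps)
      qed
      finally show ?thesis .
    qed
    have "F (\<sigma> j) = x * ((\<Prod>b\<in>\<sigma> ` (I - {j}). (\<sigma> j - b + c b) / (\<sigma> j - b))
         * (\<Prod>b\<in>T. (\<sigma> j - b + c b) / (\<sigma> j - b)))"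
      unfolding F_def cs Ad
    proof (subst prod.union_disjoint)
      show "\<sigma> ` (I - {j}) \<inter> T = {}" using disj by (auto simp: S_def)
    qed (use finI finS in auto)
    also have "\<dots> = x * phi x (beta n \<sigma> \<tau> j)"
      unfolding p1 p2 using phi_beta[where u=\<sigma> and v=\<tau> and j=j and x=x and n=n] injs j nz by (simp add: I_def)
    finally show ?thesis .
  qed
  have Ft: "F (- \<tau> j) = - x * phi x (beta n \<tau> \<sigma> j)" if j: "j \<in> I" for j
  proof -
    have jT: "- \<tau> j \<in> T" using j by (simp add: T_def)
    have cs: "c (- \<tau> j) = - x" using jT disj by (auto simp: c_def)
    have Ad: "A - {- \<tau> j} = (\<lambda>i. - \<tau> i) ` (I - {j}) \<union> S"
      using disj j injt by (auto simp: A_def T_def inj_on_def)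
    have p1: "(\<Prod>b\<in>(\<lambda>i. - \<tau> i) ` (I - {j}). (- \<tau> j - b + c b) / (- \<tau> j - b))
        = (\<Prod>i\<in>I-{j}. (\<tau> i - \<tau> j - x) / (\<tau> i - \<tau> j))"
    proof -
      have ij: "inj_on (\<lambda>i. - \<tau> i) (I - {j})" using injmt by (rule inj_on_subset) auto
      have "(\<Prod>b\<in>(\<lambda>i. - \<tau> i) ` (I - {j}). (- \<tau> j - b + c b) / (- \<tau> j - b))
          = (\<Prod>i\<in>I-{j}. (- \<tau> j - - \<tau> i + c (- \<tau> i)) / (- \<tau> j - - \<tau> i))"
        by (rule prod.reindex[OF ij, unfolded o_def])
      also have "\<dots> = (\<Prod>i\<in>I-{j}. (\<tau> i - \<tau> j - x) / (\<tau> i - \<tau> j))"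
      proof (rule prod.cong[OF refl])
        fix i assume "i \<in> I - {j}"
        then have "- \<tau> i \<in> T" by (simp add: T_def)
        then have "c (- \<tau> i) = - x" using disj by (auto simp: c_def)
        then show "(- \<tau> j - - \<tau> i + c (- \<tau> i)) / (- \<tau> j - - \<tau> i) = (\<tau> i - \<tau> j - x) / (\<tau> i - \<tau> j)"
          by (simp add: algebra_simps)
      qed
      finally show ?thesis .
    qed
    have p2: "(\<Prod>b\<in>S. (- \<tau> j - b + c b) / (- \<tau> j - b))
        = (\<Prod>i\<in>I. (\<sigma> i + \<tau> j - x) / (\<sigma> i + \<tau> j))"
    proof -
      have "(\<Prod>b\<in>S. (- \<tau> j - b + c b) / (- \<tau> j - b))
          = (\<Prod>i\<in>I. (- \<tau> j - \<sigma> i + c (\<sigma> i)) / (- \<tau> j - \<sigma> i))"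
        unfolding S_def by (rule prod.reindex[OF injs, unfolded o_def])
      also have "\<dots> = (\<Prod>i\<in>I. (\<sigma> i + \<tau> j - x) / (\<sigma> i + \<tau> j))"
      proof (rule prod.cong[OF refl])
        fix i assume i: "i \<in> I"
        then have "c (\<sigma> i) = x" by (simp add: c_def S_def)
        have e1: "- \<tau> j - \<sigma> i + x = - (\<sigma> i + \<tau> j - x)" by (simp add: algebra_simps)
        have e2: "- \<tau> j - \<sigma> i = - (\<sigma> i + \<tau> j)" by (simp add: algebra_simps)
        show "(- \<tau> j - \<sigma> i + c (\<sigma> i)) / (- \<tau> j - \<sigma> i) = (\<sigma> i + \<tau> j - x) / (\<sigma> i + \<tau> j)"
          unfolding \<open>c (\<sigma> i) = x\<close> by (subst e1, subst e2, rule minus_divide_divide)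
      qed
      finally show ?thesis .
    qed
    have "F (- \<tau> j) = - x * ((\<Prod>b\<in>(\<lambda>i. - \<tau> i) ` (I - {j}). (- \<tau> j - b + c b) / (- \<tau> j - b))
         * (\<Prod>b\<in>S. (- \<tau> j - b + c b) / (- \<tau> j - b)))"
      unfolding F_def cs Ad
    proof (subst prod.union_disjoint)
      show "(\<lambda>i. - \<tau> i) ` (I - {j}) \<inter> S = {}" using disj by (auto simp: T_def)
    qed (use finI finS in auto)
    also have "\<dots> = - x * phi x (beta n \<tau> \<sigma> j)"
      unfolding p1 p2 using phi_beta[where u=\<tau> and v=\<sigma> and j=j and x=x and n=n] injt j nz
      by (simp add: I_def add.commute)
    finally show ?thesis .
  qed
  have "sum F A = sum F S + sum F T" unfolding A_def by (rule sum.union_disjoint; use finS disj in simp)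
  also have "sum F S = (\<Sum>j\<in>I. F (\<sigma> j))" unfolding S_def by (rule sum.reindex[OF injs, unfolded o_def])
  also have "\<dots> = x * Phi n x \<sigma> \<tau>" by (simp add: Phi_def I_def Fs sum_distrib_left)
  also have "sum F T = (\<Sum>j\<in>I. F (- \<tau> j))" unfolding T_def by (rule sum.reindex[OF injmt, unfolded o_def])
  also have "\<dots> = - x * Phi n x \<tau> \<sigma>" by (simp add: Phi_def I_def Ft sum_distrib_left)
  finally have "x * Phi n x \<sigma> \<tau> + - x * Phi n x \<tau> \<sigma> = 0" using F0 by simp
  then have "x * (Phi n x \<sigma> \<tau> - Phi n x \<tau> \<sigma>) = 0" by (simp add: algebra_simps)
  then show ?thesis using xnz by simp
qed

end
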